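(* In single-hop Peg Duotaire, if for every $k\in\mathbb{N}$ there exists a position with nim-value at least $k$, then the set $P\subseteq\{0,1\}^*$ of words $w$ such that the position $w$ is a $\mathcal{P}$-position is not a regular language.
   Context: Peg Duotaire is an impartial two-player game played on the infinite line of sites indexed by $\mathbb{Z}$, each site holding a peg or being a hole, with finitely many pegs. A word $w\in\{0,1\}^*$ denotes the position in which $w$ is written on consecutive sites ($1$ = peg, $0$ = hole) and all other sites are holes. A hop: for a peg at site $i$, a peg at site $i+d$ and a hole at site $i+2d$ ($d=\pm1$), move the peg from $i$ to $i+2d$ and remove the peg at $i+d$. In the single-hop version, each move consists of exactly one hop. Players alternate moves; a player unable to move loses. The nim-value of a position is the least nonnegative integer not among the nim-values of positions reachable in one move; a $\mathcal{P}$-position is one with nim-value $0$. *)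

theory Defs
  imports Main
begin

text \<open>A position is the (finite) set of sites of \<int> holding a peg.\<close>

definition hop :: "int set \<Rightarrow> int set \<Rightarrow> bool" where
  "hop S S' \<longleftrightarrow> (\<exists>i d. (d = 1 \<or> d = -1) \<and> i \<in> S \<and> i + d \<in> S \<and> i + 2*d \<notin> S
      \<and> S' = insert (i + 2*d) (S - {i, i + d}))"

definition mex :: "nat set \<Rightarrow> nat" where
  "mex A = (LEAST n. n \<notin> A)"

lemma hop_card: "finite S \<Longrightarrow> hop S S' \<Longrightarrow> finite S' \<and> card S' < card S"
proof -
  assume f: "finite S" and h: "hop S S'"
  then obtain i d where d: "d = 1 \<or> d = -1" and m: "i \<in> S" "i + d \<in> S" "i + 2*d \<notin> S"
    and S': "S' = insert (i + 2*d) (S - {i, i + d})" unfolding hop_def by blast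
  have ne: "i \<noteq> i + d" using d by auto
  have "card (S - {i, i+d}) = card S - 2" using f m ne by (simp add: card_Diff_subset)
  moreover have "i + 2*d \<notin> S - {i, i+d}" using m by simp
  moreover have "card {i, i+d} \<le> card S" using m f by (intro card_mono) auto
  moreover have "card {i, i+d} = 2" using ne by simp
  ultimately show ?thesis using S' f by simp
qed

function nim :: "int set \<Rightarrow> nat" where
  "nim S = (if finite S then mex (nim ` {S'. hop S S'}) else 0)"
  by auto
termination
  by (relation "measure card") (auto dest: hop_card)

definition pos_of :: "bool list \<Rightarrow> int set" where
  "pos_of w = {int i | i. i < length w \<and> w ! i}"

definition regular :: "bool list set \<Rightarrow> bool" where
  "regular L \<longleftrightarrow> (\<exists>(Q :: nat set) q0 (\<delta> :: nat \<Rightarrow> bool \<Rightarrow> nat) F.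
      finite Q \<and> q0 \<in> Q \<and> (\<forall>q\<in>Q. \<forall>a. \<delta> q a \<in> Q) \<and> F \<subseteq> Q \<and>
      L = {w. foldl \<delta> q0 w \<in> F})"

end

theory Submission
  imports Defs
begin

declare nim.simps[simp del]

lemma hop_finite_set:
  assumes "finite S" shows "finite {S'. hop S S'}"
proof -
  have "{S'. hop S S'} \<subseteq> (\<lambda>(i,d). insert (i + 2*d) (S - {i, i + d})) ` (S \<times> {1, -1})"
    unfolding hop_def by auto
  moreover have "finite ((\<lambda>(i,d). insert (i + 2*d) (S - {i, i + d})) ` (S \<times> {1::int, -1}))"
    using assms by auto
  ultimately show ?thesis by (rule finite_subset)
qed

lemma mex_notin: "finite A \<Longrightarrow> mex A \<notin> A"
  unfolding mex_def
  by (rule LeastI_ex) (meson ex_new_if_finite infinite_UNIV_nat)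

lemma mex_less: "j < mex A \<Longrightarrow> j \<in> A"
  unfolding mex_def using not_less_Least by blast

lemma N1: "finite S \<Longrightarrow> hop S S' \<Longrightarrow> nim S' \<noteq> nim S"
proof -
  assume f: "finite S" and h: "hop S S'"
  have "nim S = mex (nim ` {S'. hop S S'})" using f by (subst nim.simps) simp
  moreover have "mex (nim ` {S'. hop S S'}) \<notin> nim ` {S'. hop S S'}"
    using f hop_finite_set by (intro mex_notin) auto
  ultimately show ?thesis using h by (metis (mono_tags, lifting) image_eqI mem_Collect_eq)
qed

lemma N2: "finite S \<Longrightarrow> j < nim S \<Longrightarrow> \<exists>S'. hop S S' \<and> nim S' = j"
proof -
  assume f: "finite S" and j: "j < nim S"
  have "nim S = mex (nim ` {S'. hop S S'})" using f by (subst nim.simps) simp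
  then have "j \<in> nim ` {S'. hop S S'}" using j mex_less by metis
  then show ?thesis by auto
qed

definition sep :: "int set \<Rightarrow> int set \<Rightarrow> bool" where
  "sep A B \<longleftrightarrow> (\<forall>a\<in>A. \<forall>b\<in>B. a + 2 * int (card A + card B) < b)"

lemma sep_disj: "finite A \<Longrightarrow> sep A B \<Longrightarrow> A \<inter> B = {}"
proof (rule ccontr)
  assume "finite A" "sep A B" "A \<inter> B \<noteq> {}"
  then obtain x where "x \<in> A" "x \<in> B" by auto
  then show False using \<open>sep A B\<close> unfolding sep_def by fastforce
qed

lemma hopL:
  assumes fA: "finite A" and fB: "finite B" and s: "sep A B" and h: "hop A A'"
  shows "hop (A \<union> B) (A' \<union> B) \<and> sep A' B"
proof -
  obtain i d where d: "d = 1 \<or> d = -1" and m: "i \<in> A" "i + d \<in> A" "i + 2*d \<notin> A"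
    and A': "A' = insert (i + 2*d) (A - {i, i + d})" using h unfolding hop_def by blast
  have cA: "card A' < card A" using hop_card[OF fA h] by simp
  have nB: "i + 2*d \<notin> B"
  proof
    assume "i + 2*d \<in> B"
    then have "i + d + 2 * int (card A + card B) < i + 2*d" using s m unfolding sep_def by blast
    moreover have "card A \<ge> 1" using m fA by (metis One_nat_def Suc_leI card_gt_0_iff empty_iff)
    ultimately show False using d by auto
  qed
  have "i \<notin> B" "i + d \<notin> B" using sep_disj[OF fA s] m by auto
  then have "hop (A \<union> B) (A' \<union> B)" unfolding hop_def A'
    using d m nB by (intro exI[of _ i] exI[of _ d]) auto
  moreover have "sep A' B" unfolding sep_def
  proof (intro ballI)
    fix a b assume a: "a \<in> A'" and b: "b \<in> B"
    show "a + 2 * int (card A' + card B) < b"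
    proof (cases "a = i + 2*d")
      case True
      have "i + d + 2 * int (card A + card B) < b" using s m b unfolding sep_def by blast
      then show ?thesis using True d cA by auto
    next
      case False
      then have "a \<in> A" using a A' by auto
      then have "a + 2 * int (card A + card B) < b" using s b unfolding sep_def by blast
      then show ?thesis using cA by auto
    qed
  qed
  ultimately show ?thesis by blast
qed

lemma hopR:
  assumes fA: "finite A" and fB: "finite B" and s: "sep A B" and h: "hop B B'"
  shows "hop (A \<union> B) (A \<union> B') \<and> sep A B'"
proof -
  obtain i d where d: "d = 1 \<or> d = -1" and m: "i \<in> B" "i + d \<in> B" "i + 2*d \<notin> B"
    and B': "B' = insert (i + 2*d) (B - {i, i + d})" using h unfolding hop_def by blast
  have cB: "card B' < card B" using hop_card[OF fB h] by simp
  have nA: "i + 2*d \<notin> A"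
  proof
    assume "i + 2*d \<in> A"
    then have "i + 2*d + 2 * int (card A + card B) < i + d" using s m unfolding sep_def by blast
    moreover have "card B \<ge> 1" using m fB by (metis One_nat_def Suc_leI card_gt_0_iff empty_iff)
    ultimately show False using d by auto
  qed
  have "i \<notin> A" "i + d \<notin> A" using sep_disj[OF fA s] m by auto
  then have "hop (A \<union> B) (A \<union> B')" unfolding hop_def B'
    using d m nA by (intro exI[of _ i] exI[of _ d]) auto
  moreover have "sep A B'" unfolding sep_def
  proof (intro ballI)
    fix a b assume a: "a \<in> A" and b: "b \<in> B'"
    show "a + 2 * int (card A + card B') < b"
    proof (cases "b = i + 2*d")
      case True
      have "a + 2 * int (card A + card B) < i + d" using s m a unfolding sep_def by blast
      then show ?thesis using True d cB by auto
    next
      case False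
      then have "b \<in> B" using b B' by auto
      then have "a + 2 * int (card A + card B) < b" using s a unfolding sep_def by blast
      then show ?thesis using cB by auto
    qed
  qed
  ultimately show ?thesis by blast
qed

lemma hop_split:
  assumes fA: "finite A" and fB: "finite B" and s: "sep A B" and h: "hop (A \<union> B) S'"
  shows "(\<exists>A'. hop A A' \<and> S' = A' \<union> B) \<or> (\<exists>B'. hop B B' \<and> S' = A \<union> B')"
proof -
  obtain i d where d: "d = 1 \<or> d = -1" and m: "i \<in> A \<union> B" "i + d \<in> A \<union> B" "i + 2*d \<notin> A \<union> B"
    and S': "S' = insert (i + 2*d) ((A \<union> B) - {i, i + d})" using h unfolding hop_def by blast
  have dj: "A \<inter> B = {}" using sep_disj[OF fA s] .
  have c1: "\<not> (i \<in> A \<and> i + d \<in> B)"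
  proof
    assume a: "i \<in> A \<and> i + d \<in> B"
    then have "i + 2 * int (card A + card B) < i + d" using s unfolding sep_def by blast
    moreover have "card A \<ge> 1" using a fA by (metis One_nat_def Suc_leI card_gt_0_iff empty_iff)
    ultimately show False using d by auto
  qed
  have c2: "\<not> (i \<in> B \<and> i + d \<in> A)"
  proof
    assume a: "i \<in> B \<and> i + d \<in> A"
    then have "i + d + 2 * int (card A + card B) < i" using s unfolding sep_def by blast
    moreover have "card A \<ge> 1" using a fA by (metis One_nat_def Suc_leI card_gt_0_iff empty_iff)
    ultimately show False using d by auto
  qed
  show ?thesis
  proof (cases "i \<in> A")
    case True
    then have "i + d \<in> A" using c1 m by auto
    then have "hop A (insert (i + 2*d) (A - {i, i + d}))" unfolding hop_def
      using True d m by blast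
    moreover have "S' = insert (i + 2*d) (A - {i, i + d}) \<union> B"
      using S' dj True \<open>i + d \<in> A\<close> by auto
    ultimately show ?thesis by blast
  next
    case False
    then have "i \<in> B" "i + d \<in> B" using c2 m by auto
    then have "hop B (insert (i + 2*d) (B - {i, i + d}))" unfolding hop_def
      using d m by blast
    moreover have "S' = A \<union> insert (i + 2*d) (B - {i, i + d})"
      using S' dj \<open>i \<in> B\<close> \<open>i + d \<in> B\<close> by auto
    ultimately show ?thesis by blast
  qed
qed

lemma sum_zero:
  "finite A \<Longrightarrow> finite B \<Longrightarrow> sep A B \<Longrightarrow> (nim (A \<union> B) = 0 \<longleftrightarrow> nim A = nim B)"
proof (induction "card A + card B" arbitrary: A B rule: less_induct)
  case less
  note fA = less.prems(1) and fB = less.prems(2) and s = less.prems(3)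
  have fU: "finite (A \<union> B)" using fA fB by simp
  show ?case
  proof
    assume z: "nim (A \<union> B) = 0"
    show "nim A = nim B"
    proof (rule ccontr)
      assume ne: "nim A \<noteq> nim B"
      show False
      proof (cases "nim B < nim A")
        case True
        then obtain A' where h: "hop A A'" and v: "nim A' = nim B" using N2 fA by blast
        have f': "finite A'" "card A' < card A" using hop_card[OF fA h] by auto
        have hs: "hop (A \<union> B) (A' \<union> B)" "sep A' B" using hopL[OF fA fB s h] by auto
        have "nim (A' \<union> B) = 0" using less.hyps[of A' B] f' fB hs v by auto
        then show False using N1[OF fU hs(1)] z by simp
      next
        case False
        then have lt: "nim A < nim B" using ne by simp
        then obtain B' where h: "hop B B'" and v: "nim B' = nim A" using N2 fB by blast
        have f': "finite B'" "card B' < card B" using hop_card[OF fB h] by auto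
        have hs: "hop (A \<union> B) (A \<union> B')" "sep A B'" using hopR[OF fA fB s h] by auto
        have "nim (A \<union> B') = 0" using less.hyps[of A B'] f' fA hs v by auto
        then show False using N1[OF fU hs(1)] z by simp
      qed
    qed
  next
    assume e: "nim A = nim B"
    show "nim (A \<union> B) = 0"
    proof (rule ccontr)
      assume "nim (A \<union> B) \<noteq> 0"
      then obtain S' where h: "hop (A \<union> B) S'" and v: "nim S' = 0" using N2[OF fU] by blast
      from hop_split[OF fA fB s h] show False
      proof
        assume "\<exists>A'. hop A A' \<and> S' = A' \<union> B"
        then obtain A' where h': "hop A A'" and S': "S' = A' \<union> B" by blast
        have f': "finite A'" "card A' < card A" using hop_card[OF fA h'] by auto
        have "sep A' B" using hopL[OF fA fB s h'] by auto
        then have "nim A' = nim B" using less.hyps[of A' B] f' fB v S' by auto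
        then show False using N1[OF fA h'] e by simp
      next
        assume "\<exists>B'. hop B B' \<and> S' = A \<union> B'"
        then obtain B' where h': "hop B B'" and S': "S' = A \<union> B'" by blast
        have f': "finite B'" "card B' < card B" using hop_card[OF fB h'] by auto
        have "sep A B'" using hopR[OF fA fB s h'] by auto
        then have "nim A = nim B'" using less.hyps[of A B'] f' fA v S' by auto
        then show False using N1[OF fB h'] e by simp
      qed
    qed
  qed
qed

lemma hop_shift: "hop S S' \<Longrightarrow> hop ((+) c ` S) ((+) c ` S')"
proof -
  assume "hop S S'"
  then obtain i d where d: "d = 1 \<or> d = -1" and m: "i \<in> S" "i + d \<in> S" "i + 2*d \<notin> S"
    and S': "S' = insert (i + 2*d) (S - {i, i + d})" unfolding hop_def by blast
  have "(+) c ` S' = insert (c + i + 2*d) ((+) c ` S - {c + i, c + i + d})"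
    unfolding S' by (auto simp: algebra_simps)
  moreover have "c + i \<in> (+) c ` S" "c + i + d \<in> (+) c ` S" "c + i + 2*d \<notin> (+) c ` S"
    using m by (auto simp: algebra_simps)
  ultimately show ?thesis unfolding hop_def using d by blast
qed

lemma hop_shift_iff: "hop ((+) c ` S) T \<longleftrightarrow> (\<exists>S'. hop S S' \<and> T = (+) c ` S')"
proof
  assume h: "hop ((+) c ` S) T"
  have "hop ((+) (-c) ` (+) c ` S) ((+) (-c) ` T)" by (rule hop_shift[OF h])
  moreover have "(+) (-c) ` (+) c ` S = S" by (simp add: image_image)
  moreover have "T = (+) c ` (+) (-c) ` T" by (simp add: image_image)
  ultimately show "\<exists>S'. hop S S' \<and> T = (+) c ` S'" by auto
next
  assume "\<exists>S'. hop S S' \<and> T = (+) c ` S'"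
  then show "hop ((+) c ` S) T" using hop_shift by blast
qed

lemma nim_shift: "finite S \<Longrightarrow> nim ((+) c ` S) = nim S"
proof (induction "card S" arbitrary: S rule: less_induct)
  case less
  have e: "{T. hop ((+) c ` S) T} = (\<lambda>S'. (+) c ` S') ` {S'. hop S S'}"
    using hop_shift_iff by blast
  have "nim ` {T. hop ((+) c ` S) T} = nim ` {S'. hop S S'}"
  proof -
    have "nim ` {T. hop ((+) c ` S) T} = (\<lambda>S'. nim ((+) c ` S')) ` {S'. hop S S'}"
      unfolding e by (simp add: image_image)
    also have "\<dots> = nim ` {S'. hop S S'}"
    proof (rule image_cong[OF refl])
      fix S' assume "S' \<in> {S'. hop S S'}"
      then have "hop S S'" by simp
      then show "nim ((+) c ` S') = nim S'" using less hop_card by blast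
    qed
    finally show ?thesis .
  qed
  moreover have "finite ((+) c ` S)" using less.prems by simp
  ultimately show ?case using less.prems by (subst (1 2) nim.simps) simp
qed

lemma pos_of_append: "pos_of (u @ v) = pos_of u \<union> (+) (int (length u)) ` pos_of v"
proof (rule set_eqI)
  fix x
  show "x \<in> pos_of (u @ v) \<longleftrightarrow> x \<in> pos_of u \<union> (+) (int (length u)) ` pos_of v"
  proof
    assume "x \<in> pos_of (u @ v)"
    then obtain i where i: "x = int i" "i < length u + length v" "(u @ v) ! i"
      unfolding pos_of_def by auto
    show "x \<in> pos_of u \<union> (+) (int (length u)) ` pos_of v"
    proof (cases "i < length u")
      case True
      then show ?thesis using i unfolding pos_of_def by (auto simp: nth_append)
    next
      case False
      then have "int (i - length u) \<in> pos_of v" using i unfolding pos_of_def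
        by (auto simp: nth_append intro!: exI[of _ "i - length u"])
      moreover have "x = int (length u) + int (i - length u)" using False i by simp
      ultimately show ?thesis by blast
    qed
  next
    assume "x \<in> pos_of u \<union> (+) (int (length u)) ` pos_of v"
    then show "x \<in> pos_of (u @ v)"
    proof
      assume "x \<in> pos_of u"
      then obtain i where i: "x = int i" "i < length u" "u ! i" unfolding pos_of_def by auto
      then show ?thesis unfolding pos_of_def by (auto simp: nth_append intro!: exI[of _ i])
    next
      assume "x \<in> (+) (int (length u)) ` pos_of v"
      then obtain i where i: "x = int (length u) + int i" "i < length v" "v ! i"
        unfolding pos_of_def by auto
      then show ?thesis unfolding pos_of_def
        by (auto simp: nth_append intro!: exI[of _ "length u + i"])
    qed
  qed
qed

lemma pos_of_repl: "pos_of (replicate n False) = {}"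
  unfolding pos_of_def by auto

lemma pos_of_bound: "x \<in> pos_of w \<Longrightarrow> 0 \<le> x \<and> x < int (length w)"
  unfolding pos_of_def by auto

lemma pos_of_eq: "pos_of w = int ` {i. i < length w \<and> w ! i}"
  unfolding pos_of_def by auto

lemma finite_pos_of: "finite (pos_of w)"
  unfolding pos_of_eq by simp

lemma card_pos_of: "card (pos_of w) \<le> length w"
proof -
  have "card (pos_of w) \<le> card {i. i < length w \<and> w ! i}"
    unfolding pos_of_eq by (rule card_image_le) simp
  also have "\<dots> \<le> card {..<length w}" by (rule card_mono) auto
  finally show ?thesis by simp
qed

lemma word_of: "finite S \<Longrightarrow> \<exists>w. nim (pos_of w) = nim S"
proof -
  assume f: "finite S"
  define K where "K = (\<Sum>x\<in>S. \<bar>x\<bar>)"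
  have K: "\<bar>x\<bar> \<le> K" if "x \<in> S" for x
    unfolding K_def using f that by (intro member_le_sum) auto
  define T where "T = (+) K ` S"
  define n where "n = nat (2*K + 1)"
  define w where "w = map (\<lambda>i. int i \<in> T) [0..<n]"
  have "pos_of w = T"
  proof (rule set_eqI)
    fix x
    show "x \<in> pos_of w \<longleftrightarrow> x \<in> T"
    proof
      assume "x \<in> pos_of w" then show "x \<in> T" unfolding pos_of_def w_def by auto
    next
      assume x: "x \<in> T"
      then obtain y where y: "y \<in> S" "x = K + y" unfolding T_def by auto
      have "\<bar>y\<bar> \<le> K" using K y by auto
      then have "0 \<le> x" "x < 2*K + 1" using y by auto
      then have "nat x < n" "x = int (nat x)" unfolding n_def by auto
      then show "x \<in> pos_of w" unfolding pos_of_def w_def using x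
        by (auto intro!: exI[of _ "nat x"])
    qed
  qed
  then have "nim (pos_of w) = nim S" unfolding T_def using nim_shift f by simp
  then show ?thesis by blast
qed

lemma nim_all: "finite S \<Longrightarrow> j \<le> nim S \<Longrightarrow> \<exists>T. finite T \<and> nim T = j"
proof -
  assume f: "finite S" and j: "j \<le> nim S"
  show ?thesis
  proof (cases "j = nim S")
    case True then show ?thesis using f by blast
  next
    case False
    then have "j < nim S" using j by simp
    then obtain S' where "hop S S'" "nim S' = j" using N2[OF f] by blast
    then show ?thesis using hop_card[OF f] by blast
  qed
qed

lemma key:
  assumes "length u \<le> M" "length v \<le> M"
  shows "nim (pos_of (u @ replicate (4*M) False @ v)) = 0 \<longleftrightarrow> nim (pos_of u) = nim (pos_of v)"
proof -
  define B where "B = (+) (int (length u + 4*M)) ` pos_of v"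
  have p: "pos_of (u @ replicate (4*M) False @ v) = pos_of u \<union> B"
    unfolding B_def pos_of_append pos_of_repl by (auto simp: image_image algebra_simps)
  have cB: "card B = card (pos_of v)" unfolding B_def by (rule card_image) simp
  have s: "sep (pos_of u) B" unfolding sep_def
  proof (intro ballI)
    fix a b assume a: "a \<in> pos_of u" and b: "b \<in> B"
    have "a < int (length u)" using pos_of_bound[OF a] by simp
    moreover have "b \<ge> int (length u + 4*M)" using b pos_of_bound unfolding B_def by fastforce
    moreover have "card (pos_of u) \<le> M" "card B \<le> M"
      using card_pos_of[of u] card_pos_of[of v] cB assms by auto
    then have "int (card (pos_of u)) \<le> int M" "int (card B) \<le> int M" by simp_all
    ultimately show "a + 2 * int (card (pos_of u) + card B) < b" by (simp only: of_nat_add of_nat_mult of_nat_numeral distrib_left)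
  qed
  have nB: "nim B = nim (pos_of v)" unfolding B_def by (rule nim_shift[OF finite_pos_of])
  have fB: "finite B" unfolding B_def using finite_pos_of by simp
  show ?thesis unfolding p using sum_zero[OF finite_pos_of fB s] nB by simp
qed

lemma foldl_in: "(\<forall>q\<in>Q. \<forall>a. \<delta> q a \<in> Q) \<Longrightarrow> q \<in> Q \<Longrightarrow> foldl \<delta> q w \<in> Q"
  by (induction w arbitrary: q) auto

theorem lemma3:
  assumes "\<forall>k::nat. \<exists>S::int set. finite S \<and> nim S \<ge> k"
  shows "\<not> regular {w. nim (pos_of w) = 0}"
proof
  assume "regular {w. nim (pos_of w) = 0}"
  then obtain Q q0 \<delta> F where Q: "finite Q" "q0 \<in> Q" "\<forall>q\<in>Q. \<forall>a. (\<delta> :: nat \<Rightarrow> bool \<Rightarrow> nat) q a \<in> Q"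
    "F \<subseteq> Q" and L: "{w. nim (pos_of w) = 0} = {w. foldl \<delta> q0 w \<in> F}"
    unfolding regular_def by blast
  have "\<forall>k. \<exists>w. nim (pos_of w) = k"
  proof
    fix k
    obtain S where "finite S" "nim S \<ge> k" using assms by blast
    then obtain T where "finite T" "nim T = k" using nim_all by blast
    then show "\<exists>w. nim (pos_of w) = k" using word_of by metis
  qed
  then obtain W where W: "\<And>k. nim (pos_of (W k)) = k" by metis
  define N where "N = card Q"
  define M where "M = Max (length ` W ` {..N})"
  have lenM: "length (W k) \<le> M" if "k \<le> N" for k
    unfolding M_def using that by (intro Max_ge) auto
  define f where "f k = foldl \<delta> q0 (W k @ replicate (4*M) False)" for k
  have fQ: "f ` {..N} \<subseteq> Q" unfolding f_def using foldl_in[OF Q(3) Q(2)] by blast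
  have "\<not> inj_on f {..N}"
  proof
    assume "inj_on f {..N}"
    then have "card {..N} \<le> card Q" using card_inj_on_le[OF _ fQ Q(1)] by blast
    then show False unfolding N_def by simp
  qed
  then obtain a b where ab: "a \<le> N" "b \<le> N" "a \<noteq> b" "f a = f b"
    unfolding inj_on_def by auto
  have "foldl \<delta> q0 (W a @ replicate (4*M) False @ W a) = foldl \<delta> q0 (W b @ replicate (4*M) False @ W a)"
    using ab(4) unfolding f_def by (metis append_assoc foldl_append)
  then have "(nim (pos_of (W a @ replicate (4*M) False @ W a)) = 0) = (nim (pos_of (W b @ replicate (4*M) False @ W a)) = 0)"
    using L by (simp add: set_eq_iff)
  moreover have "nim (pos_of (W a @ replicate (4*M) False @ W a)) = 0"
    using key[OF lenM[OF ab(1)] lenM[OF ab(1)]] by simp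
  moreover have "nim (pos_of (W b @ replicate (4*M) False @ W a)) \<noteq> 0"
    using key[OF lenM[OF ab(2)] lenM[OF ab(1)]] W ab(3) by simp
  ultimately show False by simp
qed

end
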